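(* Let $\mathsf{T}$ be the algebra antihomomorphism of $U_{K,L,norm}$ (i.e. linear with $\mathsf{T}(xy)=\mathsf{T}(y)\mathsf{T}(x)$, $\mathsf{T}(\mathbf{1})=\mathbf{1}$) determined by $\mathsf{T}(K)=\overline{K}$, $\mathsf{T}(\overline{K})=K$, $\mathsf{T}(L)=\overline{L}$, $\mathsf{T}(\overline{L})=L$, $\mathsf{T}(E)=-E(\overline{K}+\overline{L})$, $\mathsf{T}(F)=-(K+L)F$. Then $\mathsf{T}$ is von Neumann regular with respect to convolution: $\mathsf{id}\star\mathsf{T}\star\mathsf{id}=\mathsf{id}$ and $\mathsf{T}\star\mathsf{id}\star\mathsf{T}=\mathsf{T}$.
   Context: Fix $q\in\mathbb{C}$, $q\neq 0,\pm1$. $U_{K,L,norm}$ is the unital associative $\mathbb{C}$-algebra generated by $K,\overline{K},L,\overline{L},E,F$ subject to $K\overline{K}K=K$, $\overline{K}K\overline{K}=\overline{K}$, $K\overline{K}=\overline{K}K$, $L\overline{L}L=L$, $\overline{L}L\overline{L}=\overline{L}$, $L\overline{L}=\overline{L}L$, $K\overline{K}+L\overline{L}=\mathbf{1}$, $KE=q^2EK$, $LE=q^2EL$, $\overline{K}E=q^{-2}E\overline{K}$, $\overline{L}E=q^{-2}E\overline{L}$, $KF=q^{-2}FK$, $LF=q^{-2}FL$, $\overline{K}F=q^2F\overline{K}$, $\overline{L}F=q^2F\overline{L}$, $EF-FE=\frac{(K+L)-(\overline{K}+\overline{L})}{q-q^{-1}}$. It is a bialgebra with the algebra homomorphisms $\Delta,\varepsilon$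 determined by $\Delta(K)=K\otimes K$, $\Delta(\overline{K})=\overline{K}\otimes\overline{K}$, $\Delta(L)=L\otimes L+L\otimes K+K\otimes L$, $\Delta(\overline{L})=\overline{L}\otimes\overline{L}+\overline{L}\otimes\overline{K}+\overline{K}\otimes\overline{L}$, $\Delta(E)=\mathbf{1}\otimes E+E\otimes(K+L)$, $\Delta(F)=F\otimes\mathbf{1}+(\overline{K}+\overline{L})\otimes F$, $\varepsilon(K)=\varepsilon(\overline{K})=1$, $\varepsilon(L)=\varepsilon(\overline{L})=\varepsilon(E)=\varepsilon(F)=0$. For linear maps $A,B$ of $U_{K,L,norm}$, the convolution is $A\star B=\mu\circ(A\otimes B)\circ\Delta$, where $\mu$ is the multiplication. *)

theory Defs
  imports Complex_Main "HOL-Library.Poly_Mapping"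
begin

datatype gen = gK | gKb | gL | gLb | gE | gF

type_synonym free = "gen list \<Rightarrow>\<^sub>0 complex"

definition fmul :: "free \<Rightarrow> free \<Rightarrow> free" where
  "fmul p r = (\<Sum>u\<in>Poly_Mapping.keys p. \<Sum>v\<in>Poly_Mapping.keys r. Poly_Mapping.single (u @ v) (Poly_Mapping.lookup p u * Poly_Mapping.lookup r v))"

definition fsc :: "complex \<Rightarrow> free \<Rightarrow> free" where
  "fsc c p = fmul (Poly_Mapping.single [] c) p"

definition fone :: free where "fone = Poly_Mapping.single [] 1"

definition fgen :: "gen \<Rightarrow> free" where "fgen g = Poly_Mapping.single [g] 1"

definition flin :: "(gen list \<Rightarrow> free) \<Rightarrow> free \<Rightarrow> free" where
  "flin f p = (\<Sum>u\<in>Poly_Mapping.keys p. fsc (Poly_Mapping.lookup p u) (f u))"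

definition rels :: "complex \<Rightarrow> free set" where
  "rels q = (let K = fgen gK; Kb = fgen gKb; L = fgen gL; Lb = fgen gLb; E = fgen gE; F = fgen gF;
               m = fmul in
   { m K (m Kb K) - K, m Kb (m K Kb) - Kb, m K Kb - m Kb K,
     m L (m Lb L) - L, m Lb (m L Lb) - Lb, m L Lb - m Lb L,
     m K Kb + m L Lb - fone,
     m K E - fsc (q^2) (m E K), m L E - fsc (q^2) (m E L),
     m Kb E - fsc (q powi -2) (m E Kb), m Lb E - fsc (q powi -2) (m E Lb),
     m K F - fsc (q powi -2) (m F K), m L F - fsc (q powi -2) (m F L),
     m Kb F - fsc (q^2) (m F Kb), m Lb F - fsc (q^2) (m F Lb),
     m E F - m F E - fsc (1 / (q - inverse q)) ((K + L) - (Kb + Lb)) })"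

inductive_set ideal_U :: "complex \<Rightarrow> free set" for q where
  gen_rel: "r \<in> rels q \<Longrightarrow> r \<in> ideal_U q"
| zero: "0 \<in> ideal_U q"
| add: "a \<in> ideal_U q \<Longrightarrow> b \<in> ideal_U q \<Longrightarrow> a + b \<in> ideal_U q"
| mult: "a \<in> ideal_U q \<Longrightarrow> fmul x (fmul a y) \<in> ideal_U q"

text \<open>Equality in U_{K,L,norm}: two representatives are equal iff their difference lies in the ideal.\<close>
definition eqU :: "complex \<Rightarrow> free \<Rightarrow> free \<Rightarrow> bool" where
  "eqU q a b \<longleftrightarrow> a - b \<in> ideal_U q"

text \<open>Delta of a generator, as a list of simple tensors a \<otimes> b.\<close>
fun Dgen :: "gen \<Rightarrow> (free \<times> free) list" where
  "Dgen gK = [(fgen gK, fgen gK)]"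
| "Dgen gKb = [(fgen gKb, fgen gKb)]"
| "Dgen gL = [(fgen gL, fgen gL), (fgen gL, fgen gK), (fgen gK, fgen gL)]"
| "Dgen gLb = [(fgen gLb, fgen gLb), (fgen gLb, fgen gKb), (fgen gKb, fgen gLb)]"
| "Dgen gE = [(fone, fgen gE), (fgen gE, fgen gK + fgen gL)]"
| "Dgen gF = [(fgen gF, fone), (fgen gKb + fgen gLb, fgen gF)]"

text \<open>Delta is an algebra homomorphism: Delta of a word is the product of the Deltas of its letters.\<close>
fun Dword :: "gen list \<Rightarrow> (free \<times> free) list" where
  "Dword [] = [(fone, fone)]"
| "Dword (g # w) = [(fmul a c, fmul b d). (a, b) \<leftarrow> Dgen g, (c, d) \<leftarrow> Dword w]"

text \<open>Convolution A \<star> B = mu \<circ> (A \<otimes> B) \<circ> Delta, for maps given on representatives.\<close>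
definition conv :: "(free \<Rightarrow> free) \<Rightarrow> (free \<Rightarrow> free) \<Rightarrow> free \<Rightarrow> free" where
  "conv A B = flin (\<lambda>u. sum_list (map (\<lambda>(a, b). fmul (A a) (B b)) (Dword u)))"

definition Tgen :: "gen \<Rightarrow> free" where
  "Tgen g = (case g of
      gK \<Rightarrow> fgen gKb | gKb \<Rightarrow> fgen gK | gL \<Rightarrow> fgen gLb | gLb \<Rightarrow> fgen gL
    | gE \<Rightarrow> - fmul (fgen gE) (fgen gKb + fgen gLb)
    | gF \<Rightarrow> - fmul (fgen gK + fgen gL) (fgen gF))"

fun Tword :: "gen list \<Rightarrow> free" where
  "Tword [] = fone"
| "Tword (g # w) = fmul (Tword w) (Tgen g)"

definition Tmap :: "free \<Rightarrow> free" where "Tmap = flin Tword"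

end

theory Submission
  imports Defs
begin
instantiation list :: (type) monoid_add
begin
definition zero_list :: "'a list" where "zero_list = []"
definition plus_list :: "'a list \<Rightarrow> 'a list \<Rightarrow> 'a list" where "plus_list = append"
instance by standard (simp_all add: zero_list_def plus_list_def)
end

abbreviation sc :: "complex \<Rightarrow> free" where "sc c \<equiv> Poly_Mapping.single [] c"

lemma pm_expand: "(p::free) = (\<Sum>u\<in>Poly_Mapping.keys p. Poly_Mapping.single u (Poly_Mapping.lookup p u))"
  by (rule poly_mapping_eqI) (simp add: lookup_sum lookup_single when_def in_keys_iff)

lemma fmul_eq: "fmul p r = p * r"
proof -
  have "fmul p r = (\<Sum>u\<in>Poly_Mapping.keys p. \<Sum>v\<in>Poly_Mapping.keys r. Poly_Mapping.single u (Poly_Mapping.lookup p u) * Poly_Mapping.single v (Poly_Mapping.lookup r v))"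
    unfolding fmul_def by (simp add: mult_single plus_list_def)
  also have "\<dots> = (\<Sum>u\<in>Poly_Mapping.keys p. Poly_Mapping.single u (Poly_Mapping.lookup p u)) * (\<Sum>v\<in>Poly_Mapping.keys r. Poly_Mapping.single v (Poly_Mapping.lookup r v))"
    by (simp add: sum_product)
  also have "\<dots> = p * r" using pm_expand[of p] pm_expand[of r] by simp
  finally show ?thesis .
qed

lemma fone_eq: "fone = 1"
  unfolding fone_def by (metis single_one zero_list_def)

lemma sc_one: "sc 1 = 1" by (metis single_one zero_list_def)
lemma sc_zero: "sc 0 = 0" by simp

lemma fsc_eq: "fsc c p = sc c * p" by (simp add: fsc_def fmul_eq)

lemma lin_induct:
  assumes "P 0" "\<And>w c. P (Poly_Mapping.single w c)" "\<And>a b. P a \<Longrightarrow> P b \<Longrightarrow> P (a + b)"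
  shows "P (p::free)"
proof -
  have "P (\<Sum>u\<in>A. Poly_Mapping.single u (Poly_Mapping.lookup p u))" if "finite A" for A
    using that by (induction A rule: finite_induct) (auto intro: assms)
  then show ?thesis by (subst pm_expand) simp
qed

lemma single_mult: "Poly_Mapping.single u c * Poly_Mapping.single v d = Poly_Mapping.single (u @ v) (c * d)"
  by (simp add: mult_single plus_list_def)

lemma single_word: "Poly_Mapping.single w c = sc c * Poly_Mapping.single w 1"
  by (simp add: single_mult)

lemma sc_comm: "sc c * (x::free) = x * sc c"
proof (induction x rule: lin_induct)
  case (3 a b) then show ?case by (simp add: algebra_simps)
qed (simp_all add: single_mult mult.commute)

lemma sc_mult: "sc c * sc d = sc (c * d)" by (simp add: single_mult)

lemma flin_superset:
  assumes "finite S" "Poly_Mapping.keys p \<subseteq> S"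
  shows "flin f p = (\<Sum>u\<in>S. sc (Poly_Mapping.lookup p u) * f u)"
  unfolding flin_def fsc_eq
  by (rule sum.mono_neutral_left) (use assms in \<open>auto simp: in_keys_iff\<close>)

lemma flin_add: "flin f (a + b) = flin f a + flin f b"
proof -
  let ?S = "Poly_Mapping.keys a \<union> Poly_Mapping.keys b \<union> Poly_Mapping.keys (a + b)"
  have "flin f (a + b) = (\<Sum>u\<in>?S. sc (Poly_Mapping.lookup (a + b) u) * f u)"
    by (rule flin_superset) auto
  also have "\<dots> = (\<Sum>u\<in>?S. sc (Poly_Mapping.lookup a u) * f u) + (\<Sum>u\<in>?S. sc (Poly_Mapping.lookup b u) * f u)"
    by (simp add: lookup_add single_add distrib_right sum.distrib)
  also have "\<dots> = flin f a + flin f b"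
    by (subst (1 2) flin_superset[symmetric]) auto
  finally show ?thesis .
qed

lemma flin_single: "flin f (Poly_Mapping.single w c) = sc c * f w"
proof -
  have "flin f (Poly_Mapping.single w c) = (\<Sum>u\<in>{w}. sc (Poly_Mapping.lookup (Poly_Mapping.single w c) u) * f u)"
    by (rule flin_superset) auto
  then show ?thesis by simp
qed

lemma flin_zero: "flin f 0 = 0" by (simp add: flin_def)

lemma flin_uminus: "flin f (- a) = - flin f a"
proof -
  have "flin f a + flin f (-a) = 0" using flin_add[of f a "-a"] flin_zero[of f] by simp
  thus ?thesis by (metis add.inverse_unique)
qed

lemma flin_diff: "flin f (a - b) = flin f a - flin f b"
  using flin_add[of f a "-b"] flin_uminus[of f b] by simp

lemma Tmap_single: "Tmap (Poly_Mapping.single w c) = sc c * Tword w"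
  by (simp add: Tmap_def flin_single)
lemma Tmap_add: "Tmap (a + b) = Tmap a + Tmap b" by (simp add: Tmap_def flin_add)
lemma Tmap_zero: "Tmap 0 = 0" by (simp add: Tmap_def flin_zero)
lemma Tmap_uminus: "Tmap (- a) = - Tmap a" by (simp add: Tmap_def flin_uminus)
lemma Tmap_diff: "Tmap (a - b) = Tmap a - Tmap b" by (simp add: Tmap_def flin_diff)
lemma Tmap_fgen: "Tmap (fgen g) = Tgen g"
  by (simp add: fgen_def Tmap_single sc_one fmul_eq fone_eq)
lemma Tmap_one: "Tmap 1 = 1"
  using Tmap_single[of "[]" 1] by (simp add: sc_one fone_eq zero_list_def)

lemma Tword_append: "Tword (u @ v) = Tword v * Tword u"
  by (induction u) (simp_all add: fmul_eq fone_eq mult.assoc)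

lemma Tmap_mult: "Tmap (x * y) = Tmap y * Tmap x"
proof (induction x arbitrary: y rule: lin_induct)
  case 1 then show ?case by (simp add: Tmap_zero)
next
  case (3 a b) then show ?case by (simp add: Tmap_add algebra_simps)
next
  case (2 u c)
  show ?case
  proof (induction y rule: lin_induct)
    case 1 then show ?case by (simp add: Tmap_zero)
  next
    case (3 a b) then show ?case by (simp add: Tmap_add algebra_simps)
  next
    case (2 v d)
    have "Tmap (Poly_Mapping.single u c * Poly_Mapping.single v d) = sc (c*d) * (Tword v * Tword u)"
      by (simp add: single_mult Tmap_single Tword_append)
    also have "\<dots> = sc d * (sc c * Tword v) * Tword u"
      by (simp add: sc_mult[symmetric] mult.commute[of c d] mult.assoc)
    also have "\<dots> = (sc d * Tword v) * (sc c * Tword u)"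
      by (subst sc_comm[of c "Tword v"]) (simp add: mult.assoc)
    finally show ?case by (simp add: Tmap_single)
  qed
qed

definition Dsum :: "(free \<Rightarrow> free) \<Rightarrow> (free \<Rightarrow> free) \<Rightarrow> gen list \<Rightarrow> free" where
  "Dsum A B w = sum_list (map (\<lambda>(a, b). A a * B b) (Dword w))"

lemma conv_eq: "conv A B = flin (Dsum A B)"
  by (simp add: conv_def Dsum_def[abs_def] fmul_eq)

lemma Dsum_Nil: "Dsum A B [] = A 1 * B 1"
  by (simp add: Dsum_def fone_eq)

lemma sum_list_concat': "sum_list (concat xss) = sum_list (map sum_list (xss::free list list))"
  by (induction xss) simp_all

lemma Dsum_Cons: "Dsum A B (g # u) = sum_list (map (\<lambda>(a, b). sum_list (map (\<lambda>(c, d). A (a * c) * B (b * d)) (Dword u))) (Dgen g))"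
  by (simp add: Dsum_def fmul_eq sum_list_concat' map_concat comp_def split_def)

lemma conv_single: "conv A B (Poly_Mapping.single w c) = sc c * Dsum A B w"
  by (simp add: conv_eq flin_single)
lemma conv_add: "conv A B (a + b) = conv A B a + conv A B b"
  by (simp add: conv_eq flin_add)
lemma conv_zero: "conv A B 0 = 0"
  by (simp add: conv_eq flin_zero)

lemma sum_list_swap:
  fixes f :: "'a \<Rightarrow> 'b \<Rightarrow> free"
  shows
  "sum_list (map (\<lambda>x. sum_list (map (\<lambda>y. f x y) ys)) xs) = sum_list (map (\<lambda>y. sum_list (map (\<lambda>x. f x y) xs)) ys)"
  proof (induction xs)
  case (Cons a xs)
  have "sum_list (map (\<lambda>y. f a y + sum_list (map (\<lambda>x. f x y) xs)) ys) = sum_list (map (\<lambda>y. f a y) ys) + sum_list (map (\<lambda>y. sum_list (map (\<lambda>x. f x y) xs)) ys)"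
    by (rule sum_list_addf)
  with Cons show ?case by simp
qed simp

lemma sum_list_lr: "sum_list (map (\<lambda>x. a * f x * b) xs) = a * sum_list (map f xs) * (b::free)"
  by (induction xs) (simp_all add: algebra_simps)


abbreviation "XK \<equiv> fgen gK"
abbreviation "XKb \<equiv> fgen gKb"
abbreviation "XL \<equiv> fgen gL"
abbreviation "XLb \<equiv> fgen gLb"
abbreviation "XE \<equiv> fgen gE"
abbreviation "XF \<equiv> fgen gF"

lemma I_mul: "a \<in> ideal_U q \<Longrightarrow> x * a * y \<in> ideal_U q"
  using ideal_U.mult[of a q x y] by (simp add: fmul_eq mult.assoc)
lemma I_left: "a \<in> ideal_U q \<Longrightarrow> x * a \<in> ideal_U q"
  using I_mul[of a q x 1] by simp
lemma I_right: "a \<in> ideal_U q \<Longrightarrow> a * y \<in> ideal_U q"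
  using I_mul[of a q 1 y] by simp
lemma I_neg: "a \<in> ideal_U q \<Longrightarrow> - a \<in> ideal_U q"
  using I_left[of a q "-1"] by simp
lemma I_diff: "a \<in> ideal_U q \<Longrightarrow> b \<in> ideal_U q \<Longrightarrow> a - b \<in> ideal_U q"
  using ideal_U.add[of a q "-b"] I_neg[of b q] by simp

lemma eqU_refl[simp]: "eqU q a a" by (simp add: eqU_def ideal_U.zero)
lemma eqU_sym: "eqU q a b \<Longrightarrow> eqU q b a"
  unfolding eqU_def using I_neg by fastforce
lemma eqU_trans[trans]: "eqU q a b \<Longrightarrow> eqU q b c \<Longrightarrow> eqU q a c"
  unfolding eqU_def using ideal_U.add by fastforce
lemma eqU_add: "eqU q a a' \<Longrightarrow> eqU q b b' \<Longrightarrow> eqU q (a + b) (a' + b')"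
  unfolding eqU_def using ideal_U.add by (fastforce simp: algebra_simps)
lemma eqU_neg: "eqU q a a' \<Longrightarrow> eqU q (- a) (- a')"
  unfolding eqU_def using I_neg by fastforce
lemma eqU_diff: "eqU q a a' \<Longrightarrow> eqU q b b' \<Longrightarrow> eqU q (a - b) (a' - b')"
  using eqU_add[of q a a' "-b" "-b'"] eqU_neg[of q b b'] by simp
lemma eqU_ctx: "eqU q a b \<Longrightarrow> eqU q (x * a * y) (x * b * y)"
  unfolding eqU_def using I_mul[of "a - b" q x y] by (simp add: algebra_simps)
lemma eqU_l: "eqU q a b \<Longrightarrow> eqU q (x * a) (x * b)"
  using eqU_ctx[of q a b x 1] by simp
lemma eqU_r: "eqU q a b \<Longrightarrow> eqU q (a * y) (b * y)"
  using eqU_ctx[of q a b 1 y] by simp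
lemma eqU_mult: "eqU q a a' \<Longrightarrow> eqU q b b' \<Longrightarrow> eqU q (a * b) (a' * b')"
  using eqU_r[of q a a' b] eqU_l[of q b b' a'] eqU_trans by blast
lemma eqU_sum_list: "(\<And>x. x \<in> set xs \<Longrightarrow> eqU q (f x) (g x)) \<Longrightarrow> eqU q (sum_list (map f xs)) (sum_list (map g xs))"
  by (induction xs) (simp_all add: eqU_add)

definition cen :: "complex \<Rightarrow> free \<Rightarrow> bool" where "cen q z \<longleftrightarrow> (\<forall>x. eqU q (x * z) (z * x))"

lemma cenD: "cen q z \<Longrightarrow> eqU q (x * z) (z * x)" by (simp add: cen_def)
lemma cen_cong: "eqU q a b \<Longrightarrow> cen q b \<Longrightarrow> cen q a"
  unfolding cen_def
  by (meson eqU_l eqU_r eqU_sym eqU_trans)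
lemma cen_mult: "cen q a \<Longrightarrow> cen q b \<Longrightarrow> cen q (a * b)"
  unfolding cen_def
proof safe
  fix x assume A: "\<forall>x. eqU q (x * a) (a * x)" and B: "\<forall>x. eqU q (x * b) (b * x)"
  have "eqU q (x * (a * b)) (a * x * b)" using eqU_r[OF A[rule_format, of x], of b] by (simp add: mult.assoc)
  also have "eqU q (a * x * b) (a * b * x)" using eqU_l[OF B[rule_format, of x], of a] by (simp add: mult.assoc)
  finally show "eqU q (x * (a * b)) (a * b * x)" .
qed
lemma cen_add: "cen q a \<Longrightarrow> cen q b \<Longrightarrow> cen q (a + b)"
  unfolding cen_def using eqU_add by (fastforce simp: algebra_simps)
lemma cen_diff: "cen q a \<Longrightarrow> cen q b \<Longrightarrow> cen q (a - b)"
  unfolding cen_def using eqU_diff by (fastforce simp: algebra_simps)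
lemma cen_one: "cen q 1" by (simp add: cen_def)
lemma cen_zero: "cen q 0" by (simp add: cen_def)
lemma cen_sc: "cen q (sc c)" by (simp add: cen_def sc_comm)
lemma cen_sum_list: "(\<And>x. x \<in> set xs \<Longrightarrow> cen q (f x)) \<Longrightarrow> cen q (sum_list (map f xs))"
  by (induction xs) (simp_all add: cen_add cen_zero)

lemma word_cons: "Poly_Mapping.single (g # w) c = fgen g * Poly_Mapping.single w c"
  by (simp add: fgen_def single_mult)

lemma cen_gens:
  assumes "\<And>g. eqU q (fgen g * z) (z * fgen g)"
  shows "cen q z"
  unfolding cen_def
proof
  fix x
  have W: "eqU q (Poly_Mapping.single w 1 * z) (z * Poly_Mapping.single w 1)" for w
  proof (induction w)
    case Nil then show ?case by (simp add: sc_one)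
  next
    case (Cons g w)
    have "eqU q (fgen g * Poly_Mapping.single w 1 * z) (fgen g * z * Poly_Mapping.single w 1)"
      using eqU_l[OF Cons, of "fgen g"] by (simp add: mult.assoc)
    also have "eqU q (fgen g * z * Poly_Mapping.single w 1) (z * fgen g * Poly_Mapping.single w 1)"
      using eqU_r[OF assms[of g]] by simp
    finally show ?case by (simp add: word_cons mult.assoc)
  qed
  show "eqU q (x * z) (z * x)"
  proof (induction x rule: lin_induct)
    case (2 w c)
    have "eqU q (sc c * Poly_Mapping.single w 1 * z) (sc c * (z * Poly_Mapping.single w 1))"
      using eqU_l[OF W[of w], of "sc c"] by (simp add: mult.assoc)
    also have "sc c * (z * Poly_Mapping.single w 1) = z * (sc c * Poly_Mapping.single w 1)"
      by (metis mult.assoc sc_comm)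
    finally show ?case by (simp add: single_word[of w c])
  next
    case (3 a b) then show ?case using eqU_add by (fastforce simp: algebra_simps)
  qed simp
qed


context
  fixes q :: complex
  assumes q0: "q \<noteq> 0"
begin

abbreviation eqq (infix "\<approx>" 50) where "a \<approx> b \<equiv> eqU q a b"

lemma relI: "r = a - b \<Longrightarrow> r \<in> rels q \<Longrightarrow> a \<approx> b"
  unfolding eqU_def using ideal_U.gen_rel by blast


lemma R1: "XK * XKb * XK \<approx> XK" by (rule relI[OF refl]) (simp add: rels_def Let_def fmul_eq fsc_eq fone_eq mult.assoc)
lemma R2: "XKb * XK * XKb \<approx> XKb" by (rule relI[OF refl]) (simp add: rels_def Let_def fmul_eq fsc_eq fone_eq mult.assoc)
lemma R3: "XK * XKb \<approx> XKb * XK" by (rule relI[OF refl]) (simp add: rels_def Let_def fmul_eq fsc_eq fone_eq mult.assoc)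
lemma R4: "XL * XLb * XL \<approx> XL" by (rule relI[OF refl]) (simp add: rels_def Let_def fmul_eq fsc_eq fone_eq mult.assoc)
lemma R5: "XLb * XL * XLb \<approx> XLb" by (rule relI[OF refl]) (simp add: rels_def Let_def fmul_eq fsc_eq fone_eq mult.assoc)
lemma R6: "XL * XLb \<approx> XLb * XL" by (rule relI[OF refl]) (simp add: rels_def Let_def fmul_eq fsc_eq fone_eq mult.assoc)
lemma R7: "XK * XKb + XL * XLb \<approx> 1" by (rule relI[OF refl]) (simp add: rels_def Let_def fmul_eq fsc_eq fone_eq mult.assoc)
lemma R8: "XK * XE \<approx> sc (q^2) * (XE * XK)" by (rule relI[OF refl]) (simp add: rels_def Let_def fmul_eq fsc_eq fone_eq mult.assoc)
lemma R10: "XKb * XE \<approx> sc (q powi -2) * (XE * XKb)" by (rule relI[OF refl]) (simp add: rels_def Let_def fmul_eq fsc_eq fone_eq mult.assoc)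
lemma R12: "XK * XF \<approx> sc (q powi -2) * (XF * XK)" by (rule relI[OF refl]) (simp add: rels_def Let_def fmul_eq fsc_eq fone_eq mult.assoc)
lemma R14: "XKb * XF \<approx> sc (q^2) * (XF * XKb)" by (rule relI[OF refl]) (simp add: rels_def Let_def fmul_eq fsc_eq fone_eq mult.assoc)


abbreviation "ee \<equiv> XK * XKb"
abbreviation "ff \<equiv> XL * XLb"

lemma qq: "sc (q^2) * sc (q powi -2) = 1"
  using q0 by (simp add: sc_mult power_int_minus sc_one)

lemma qq': "sc (q powi -2) * sc (q^2) = 1"
  using q0 by (simp add: sc_mult power_int_minus sc_one)

lemma e_K: "ee * XK \<approx> XK" using R1 .
lemma K_e: "XK * ee \<approx> XK"
proof -
  have "XK * ee \<approx> XK * (XKb * XK)" using eqU_l[OF R3] by (simp add: mult.assoc)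
  also have "XK * (XKb * XK) \<approx> XK" using R1 by (simp add: mult.assoc)
  finally show ?thesis .
qed
lemma Kb_e: "XKb * ee \<approx> XKb" using R2 by (simp add: mult.assoc)
lemma e_Kb: "ee * XKb \<approx> XKb"
proof -
  have "ee * XKb \<approx> XKb * XK * XKb" using eqU_r[OF R3] by simp
  also have "\<dots> \<approx> XKb" using R2 .
  finally show ?thesis .
qed
lemma f_L: "ff * XL \<approx> XL" using R4 .
lemma L_f: "XL * ff \<approx> XL"
proof -
  have "XL * ff \<approx> XL * (XLb * XL)" using eqU_l[OF R6] by (simp add: mult.assoc)
  also have "XL * (XLb * XL) \<approx> XL" using R4 by (simp add: mult.assoc)
  finally show ?thesis .
qed
lemma Lb_f: "XLb * ff \<approx> XLb" using R5 by (simp add: mult.assoc)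
lemma f_Lb: "ff * XLb \<approx> XLb"
proof -
  have "ff * XLb \<approx> XLb * XL * XLb" using eqU_r[OF R6] by simp
  also have "\<dots> \<approx> XLb" using R5 .
  finally show ?thesis .
qed

lemma ee_ee: "ee * ee \<approx> ee"
  using eqU_r[OF e_K, of XKb] by (simp add: mult.assoc)

lemma ff_eq: "ff \<approx> 1 - ee"
proof -
  have "ff = (ee + ff) - ee" by simp
  also have "\<dots> \<approx> 1 - ee" using eqU_diff[OF R7 eqU_refl] .
  finally show ?thesis .
qed

lemma ef0: "ee * ff \<approx> 0"
proof -
  have "ee * ff \<approx> ee * (1 - ee)" using eqU_l[OF ff_eq] .
  also have "ee * (1 - ee) = ee - ee * ee" by (simp add: algebra_simps)
  also have "\<dots> \<approx> ee - ee" using eqU_diff[OF eqU_refl ee_ee] .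
  finally show ?thesis by simp
qed
lemma fe0: "ff * ee \<approx> 0"
proof -
  have "ff * ee \<approx> (1 - ee) * ee" using eqU_r[OF ff_eq] .
  also have "(1 - ee) * ee = ee - ee * ee" by (simp add: algebra_simps)
  also have "\<dots> \<approx> ee - ee" using eqU_diff[OF eqU_refl ee_ee] .
  finally show ?thesis by simp
qed

definition isKK where "isKK x \<longleftrightarrow> ee * x \<approx> x \<and> x * ee \<approx> x"
definition isLL where "isLL x \<longleftrightarrow> ff * x \<approx> x \<and> x * ff \<approx> x"

lemma isKK_K: "isKK XK" "isKK XKb"
  by (simp_all add: isKK_def e_K K_e e_Kb Kb_e)
lemma isLL_L: "isLL XL" "isLL XLb"
  by (simp_all add: isLL_def f_L L_f f_Lb Lb_f)

lemma KL0: assumes "isKK x" "isLL y" shows "x * y \<approx> 0" "y * x \<approx> 0" "ff * x \<approx> 0" "ee * y \<approx> 0"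
  "x * ff \<approx> 0" "y * ee \<approx> 0"
proof -
  have x1: "x \<approx> ee * x" "x \<approx> x * ee" and y1: "y \<approx> ff * y" "y \<approx> y * ff"
    using assms by (auto simp: isKK_def isLL_def intro: eqU_sym)
  have "x * y \<approx> (x * ee) * (ff * y)" using eqU_mult[OF x1(2) y1(1)] .
  also have "\<dots> = x * (ee * ff) * y" by (simp add: mult.assoc)
  also have "\<dots> \<approx> x * 0 * y" using eqU_ctx[OF ef0] .
  finally show "x * y \<approx> 0" by simp
  have "y * x \<approx> (y * ff) * (ee * x)" using eqU_mult[OF y1(2) x1(1)] .
  also have "\<dots> = y * (ff * ee) * x" by (simp add: mult.assoc)
  also have "\<dots> \<approx> y * 0 * x" using eqU_ctx[OF fe0] .
  finally show "y * x \<approx> 0" by simp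
  have "ff * x \<approx> ff * (ee * x)" using eqU_l[OF x1(1)] .
  also have "\<dots> = (ff * ee) * x" by (simp add: mult.assoc)
  also have "\<dots> \<approx> 0 * x" using eqU_r[OF fe0] .
  finally show "ff * x \<approx> 0" by simp
  have "ee * y \<approx> ee * (ff * y)" using eqU_l[OF y1(1)] .
  also have "\<dots> = (ee * ff) * y" by (simp add: mult.assoc)
  also have "\<dots> \<approx> 0 * y" using eqU_r[OF ef0] .
  finally show "ee * y \<approx> 0" by simp
  have "x * ff \<approx> (x * ee) * ff" using eqU_r[OF x1(2)] .
  also have "\<dots> = x * (ee * ff)" by (simp add: mult.assoc)
  also have "\<dots> \<approx> x * 0" using eqU_l[OF ef0] .
  finally show "x * ff \<approx> 0" by simp
  have "y * ee \<approx> (y * ff) * ee" using eqU_r[OF y1(2)] .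
  also have "\<dots> = y * (ff * ee)" by (simp add: mult.assoc)
  also have "\<dots> \<approx> y * 0" using eqU_l[OF fe0] .
  finally show "y * ee \<approx> 0" by simp
qed

lemma cen_ee: "cen q ee"
proof (rule cen_gens)
  fix g
  show "fgen g * ee \<approx> ee * fgen g"
  proof (cases g)
    case gK then show ?thesis using K_e e_K by (meson eqU_sym eqU_trans)
  next
    case gKb then show ?thesis using Kb_e e_Kb by (meson eqU_sym eqU_trans)
  next
    case gL then show ?thesis using KL0[OF isKK_K(1) isLL_L(1)] KL0[OF isKK_K(1) isLL_L(1)] by (meson eqU_sym eqU_trans)
  next
    case gLb then show ?thesis using KL0[OF isKK_K(1) isLL_L(2)] by (meson eqU_sym eqU_trans)
  next
    case gE
    have "ee * XE = XK * (XKb * XE)" by (simp add: mult.assoc)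
    also have "\<dots> \<approx> XK * (sc (q powi -2) * (XE * XKb))" using eqU_l[OF R10] .
    also have "\<dots> = sc (q powi -2) * (XK * XE) * XKb" by (metis mult.assoc sc_comm)
    also have "\<dots> \<approx> sc (q powi -2) * (sc (q^2) * (XE * XK)) * XKb" using eqU_ctx[OF R8] .
    also have "\<dots> = (sc (q powi -2) * sc (q^2)) * (XE * ee)" by (simp add: mult.assoc)
    also have "\<dots> = XE * ee" by (simp add: qq')
    finally show ?thesis using gE by (simp add: eqU_sym)
  next
    case gF
    have "ee * XF = XK * (XKb * XF)" by (simp add: mult.assoc)
    also have "\<dots> \<approx> XK * (sc (q^2) * (XF * XKb))" using eqU_l[OF R14] .
    also have "\<dots> = sc (q^2) * (XK * XF) * XKb" by (metis mult.assoc sc_comm)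
    also have "\<dots> \<approx> sc (q^2) * (sc (q powi -2) * (XF * XK)) * XKb" using eqU_ctx[OF R12] .
    also have "\<dots> = (sc (q^2) * sc (q powi -2)) * (XF * ee)" by (simp add: mult.assoc)
    also have "\<dots> = XF * ee" by (simp add: qq)
    finally show ?thesis using gF by (simp add: eqU_sym)
  qed
qed

lemma cen_ff: "cen q ff"
  by (rule cen_cong[OF ff_eq]) (intro cen_diff cen_one cen_ee)


definition "phig g = sum_list (map (\<lambda>(a,b). a * Tmap b) (Dgen g))"
definition "psig g = sum_list (map (\<lambda>(a,b). Tmap a * b) (Dgen g))"

lemmas gsimps = Tmap_add Tmap_fgen Tgen_def fmul_eq fone_eq Tmap_one Tmap_uminus


lemma zeros: "XK*XL \<approx> 0" "XK*XLb \<approx> 0" "XKb*XL \<approx> 0" "XKb*XLb \<approx> 0"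
  "XL*XK \<approx> 0" "XL*XKb \<approx> 0" "XLb*XK \<approx> 0" "XLb*XKb \<approx> 0"
  "ff*XK \<approx> 0" "ff*XKb \<approx> 0" "ee*XL \<approx> 0" "ee*XLb \<approx> 0"
  using KL0[OF isKK_K(1) isLL_L(1)] KL0[OF isKK_K(1) isLL_L(2)]
    KL0[OF isKK_K(2) isLL_L(1)] KL0[OF isKK_K(2) isLL_L(2)] by auto

lemma ef1: "ee + ff \<approx> 1" using R7 .

lemma sumKL1: "(XKb + XLb) * (XK + XL) \<approx> 1"
proof -
  have "(XKb + XLb) * (XK + XL) = XKb * XK + (XKb * XL + (XLb * XK + XLb * XL))" by (simp add: algebra_simps)
  also have "\<dots> \<approx> ee + (0 + (0 + ff))"
    by (intro eqU_add zeros eqU_sym[OF R3] eqU_sym[OF R6])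
  also have "\<dots> \<approx> 1" using ef1 by simp
  finally show ?thesis .
qed

lemma sumKL2: "(XK + XL) * (XKb + XLb) \<approx> 1"
proof -
  have "(XK + XL) * (XKb + XLb) = XK * XKb + (XK * XLb + (XL * XKb + XL * XLb))" by (simp add: algebra_simps)
  also have "\<dots> \<approx> ee + (0 + (0 + ff))"
    by (intro eqU_add zeros eqU_refl)
  also have "\<dots> \<approx> 1" using ef1 by simp
  finally show ?thesis .
qed

lemma phig_K: "phig gK \<approx> ee" by (simp add: phig_def gsimps)
lemma phig_Kb: "phig gKb \<approx> ee" by (simp add: phig_def gsimps eqU_sym[OF R3])
lemma phig_L: "phig gL \<approx> ff"
proof -
  have "phig gL = ff + (XL * XKb + XK * XLb)" by (simp add: phig_def gsimps)
  also have "\<dots> \<approx> ff + (0 + 0)" by (intro eqU_add zeros eqU_refl)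
  finally show ?thesis by simp
qed
lemma phig_Lb: "phig gLb \<approx> ff"
proof -
  have "phig gLb = XLb * XL + (XLb * XK + XKb * XL)" by (simp add: phig_def gsimps)
  also have "\<dots> \<approx> ff + (0 + 0)" by (intro eqU_add zeros eqU_sym[OF R6])
  finally show ?thesis by simp
qed
lemma phig_E: "phig gE \<approx> 0" by (simp add: phig_def gsimps)
lemma phig_F: "phig gF \<approx> 0"
proof -
  have "phig gF = XF - ((XKb + XLb) * (XK + XL)) * XF" by (simp add: phig_def gsimps mult.assoc)
  also have "\<dots> \<approx> XF - 1 * XF" by (intro eqU_diff eqU_r sumKL1 eqU_refl)
  finally show ?thesis by simp
qed

lemma psig_K: "psig gK \<approx> ee" by (simp add: psig_def gsimps eqU_sym[OF R3])
lemma psig_Kb: "psig gKb \<approx> ee" by (simp add: psig_def gsimps)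
lemma psig_L: "psig gL \<approx> ff"
proof -
  have "psig gL = XLb * XL + (XLb * XK + XKb * XL)" by (simp add: psig_def gsimps)
  also have "\<dots> \<approx> ff + (0 + 0)" by (intro eqU_add zeros eqU_sym[OF R6])
  finally show ?thesis by simp
qed
lemma psig_Lb: "psig gLb \<approx> ff"
proof -
  have "psig gLb = ff + (XL * XKb + XK * XLb)" by (simp add: psig_def gsimps)
  also have "\<dots> \<approx> ff + (0 + 0)" by (intro eqU_add zeros eqU_refl)
  finally show ?thesis by simp
qed
lemma psig_E: "psig gE \<approx> 0"
proof -
  have "psig gE = XE - XE * ((XKb + XLb) * (XK + XL))" by (simp add: psig_def gsimps mult.assoc)
  also have "\<dots> \<approx> XE - XE * 1" by (intro eqU_diff eqU_l sumKL1 eqU_refl)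
  finally show ?thesis by simp
qed
lemma psig_F: "psig gF \<approx> 0" by (simp add: psig_def gsimps)

lemma cen_phig: "cen q (phig g)"
  by (cases g) (auto intro: cen_cong[OF phig_K] cen_cong[OF phig_Kb] cen_cong[OF phig_L] cen_cong[OF phig_Lb]
     cen_cong[OF phig_E] cen_cong[OF phig_F] cen_ee cen_ff cen_zero)
lemma cen_psig: "cen q (psig g)"
  by (cases g) (auto intro: cen_cong[OF psig_K] cen_cong[OF psig_Kb] cen_cong[OF psig_L] cen_cong[OF psig_Lb]
     cen_cong[OF psig_E] cen_cong[OF psig_F] cen_ee cen_ff cen_zero)


abbreviation "phi \<equiv> conv id Tmap"
abbreviation "psi \<equiv> conv Tmap id"

lemma one_single: "(1::free) = Poly_Mapping.single [] 1" by (simp add: sc_one)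

lemma phi_one: "phi 1 = 1"
  using conv_single[of id Tmap "[]" 1] by (simp add: Dsum_Nil sc_one Tmap_one)
lemma psi_one: "psi 1 = 1"
  using conv_single[of Tmap id "[]" 1] by (simp add: Dsum_Nil sc_one Tmap_one)
lemma phi_fgen: "phi (fgen g) = phig g"
  by (simp add: fgen_def conv_single sc_one Dsum_Cons fone_eq split_def phig_def)
lemma psi_fgen: "psi (fgen g) = psig g"
  by (simp add: fgen_def conv_single sc_one Dsum_Cons fone_eq split_def psig_def)

lemma phi_cons_exact: "Dsum id Tmap (g # u) = sum_list (map (\<lambda>(a,b). a * Dsum id Tmap u * Tmap b) (Dgen g))"
proof -
  have "\<And>a b. sum_list (map (\<lambda>(c, d). id (a * c) * Tmap (b * d)) (Dword u)) = a * Dsum id Tmap u * Tmap b"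
  proof -
    fix a b
    have "(\<lambda>(c, d). id (a * c) * Tmap (b * d)) = (\<lambda>x. a * (case x of (c, d) \<Rightarrow> id c * Tmap d) * Tmap b)"
      by (auto simp: Tmap_mult mult.assoc)
    then show "sum_list (map (\<lambda>(c, d). id (a * c) * Tmap (b * d)) (Dword u)) = a * Dsum id Tmap u * Tmap b"
      by (simp only: sum_list_lr Dsum_def)
  qed
  then show ?thesis by (simp add: Dsum_Cons)
qed

lemma psi_cons_exact: "Dsum Tmap id (g # u) = sum_list (map (\<lambda>(c,d). Tmap c * psig g * d) (Dword u))"
proof -
  have "Dsum Tmap id (g # u) = sum_list (map (\<lambda>(a, b). sum_list (map (\<lambda>(c, d). Tmap c * (Tmap a * b) * d) (Dword u))) (Dgen g))"
    by (simp add: Dsum_Cons Tmap_mult mult.assoc)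
  also have "\<dots> = sum_list (map (\<lambda>(c, d). sum_list (map (\<lambda>(a, b). Tmap c * (Tmap a * b) * d) (Dgen g))) (Dword u))"
    using sum_list_swap[of "\<lambda>x y. (case y of (c, d) \<Rightarrow> Tmap c * (case x of (a, b) \<Rightarrow> Tmap a * b) * d)" "Dword u" "Dgen g"]
    by (simp add: split_def)
  also have "\<dots> = sum_list (map (\<lambda>(c,d). Tmap c * psig g * d) (Dword u))"
    by (simp add: psig_def sum_list_lr[symmetric] split_def)
  finally show ?thesis .
qed

lemma phi_cons_eq: assumes "cen q (Dsum id Tmap u)"
  shows "Dsum id Tmap (g # u) \<approx> Dsum id Tmap u * phig g"
proof -
  have "Dsum id Tmap (g # u) \<approx> sum_list (map (\<lambda>(a,b). Dsum id Tmap u * a * Tmap b) (Dgen g))"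
    unfolding phi_cons_exact
    by (rule eqU_sum_list) (auto intro: eqU_r cenD[OF assms])
  also have "\<dots> = Dsum id Tmap u * phig g"
    by (simp add: phig_def sum_list_lr[where b=1, simplified, symmetric] split_def mult.assoc)
  finally show ?thesis .
qed

lemma cen_phi_word: "cen q (Dsum id Tmap w)"
proof (induction w)
  case Nil then show ?case by (simp add: Dsum_Nil Tmap_one cen_one)
next
  case (Cons g u)
  show ?case by (rule cen_cong[OF phi_cons_eq[OF Cons]]) (intro cen_mult Cons cen_phig)
qed

lemma phi_cons: "Dsum id Tmap (g # u) \<approx> Dsum id Tmap u * phig g"
  using phi_cons_eq[OF cen_phi_word] .

lemma psi_cons: "Dsum Tmap id (g # u) \<approx> psig g * Dsum Tmap id u"
proof -
  have "Dsum Tmap id (g # u) \<approx> sum_list (map (\<lambda>(c,d). psig g * Tmap c * d) (Dword u))"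
    unfolding psi_cons_exact
    by (rule eqU_sum_list) (auto intro: eqU_r cenD[OF cen_psig])
  also have "\<dots> = psig g * Dsum Tmap id u"
    by (simp add: Dsum_def sum_list_lr[where b=1, simplified, symmetric] split_def mult.assoc)
  finally show ?thesis .
qed

lemma cen_psi_word: "cen q (Dsum Tmap id w)"
proof (induction w)
  case Nil then show ?case by (simp add: Dsum_Nil Tmap_one cen_one)
next
  case (Cons g u)
  show ?case by (rule cen_cong[OF psi_cons]) (intro cen_mult Cons cen_psig)
qed

lemma cen_phi: "cen q (phi c)"
proof (induction c rule: lin_induct)
  case 1 then show ?case by (simp add: conv_zero cen_zero)
next
  case (2 w c) then show ?case by (subst conv_single) (intro cen_mult cen_sc cen_phi_word)
next
  case (3 a b) then show ?case by (simp add: conv_add cen_add)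
qed

lemma cen_psi: "cen q (psi c)"
proof (induction c rule: lin_induct)
  case 1 then show ?case by (simp add: conv_zero cen_zero)
next
  case (2 w c) then show ?case by (subst conv_single) (intro cen_mult cen_sc cen_psi_word)
next
  case (3 a b) then show ?case by (simp add: conv_add cen_add)
qed


definition "Sg g = sum_list (map (\<lambda>(a,b). phi a * b) (Dgen g))"
definition "Rg g = sum_list (map (\<lambda>(a,b). psi a * Tmap b) (Dgen g))"

lemma phi_mul_gen: "phi (fgen h * c) \<approx> phi c * phi (fgen h)"
proof (induction c rule: lin_induct)
  case 1 then show ?case by (simp add: conv_zero)
next
  case (2 w k)
  have "phi (fgen h * Poly_Mapping.single w k) = sc k * Dsum id Tmap (h # w)"
    by (simp add: word_cons[symmetric] conv_single)
  also have "\<dots> \<approx> sc k * (Dsum id Tmap w * phig h)" using eqU_l[OF phi_cons] .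
  also have "\<dots> = phi (Poly_Mapping.single w k) * phi (fgen h)"
    by (simp add: conv_single phi_fgen mult.assoc)
  finally show ?case .
next
  case (3 a b) then show ?case by (simp add: conv_add distrib_left distrib_right eqU_add)
qed

lemma psi_mul_gen: "psi (fgen h * c) \<approx> psi (fgen h) * psi c"
proof (induction c rule: lin_induct)
  case 1 then show ?case by (simp add: conv_zero)
next
  case (2 w k)
  have "psi (fgen h * Poly_Mapping.single w k) = sc k * Dsum Tmap id (h # w)"
    by (simp add: word_cons[symmetric] conv_single)
  also have "\<dots> \<approx> sc k * (psig h * Dsum Tmap id w)" using eqU_l[OF psi_cons] .
  also have "\<dots> = psi (fgen h) * psi (Poly_Mapping.single w k)"
    by (simp add: conv_single psi_fgen) (metis mult.assoc sc_comm)
  finally show ?case .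
next
  case (3 a b) then show ?case by (simp add: conv_add distrib_left distrib_right eqU_add)
qed

lemma phi_mul_Dgen: assumes "(a, b) \<in> set (Dgen g)" shows "phi (a * c) \<approx> phi c * phi a"
proof -
  have A2: "phi (fone * c) \<approx> phi c * phi fone" by (simp add: fone_eq phi_one)
  have A3: "phi ((fgen h + fgen h') * c) \<approx> phi c * phi (fgen h + fgen h')" for h h'
    by (simp add: distrib_left distrib_right conv_add eqU_add phi_mul_gen)
  show ?thesis using assms by (cases g) (auto intro: phi_mul_gen A2 A3)
qed

lemma psi_mul_Dgen: assumes "(a, b) \<in> set (Dgen g)" shows "psi (a * c) \<approx> psi a * psi c"
proof -
  have A2: "psi (fone * c) \<approx> psi fone * psi c" by (simp add: fone_eq psi_one)
  have A3: "psi ((fgen h + fgen h') * c) \<approx> psi (fgen h + fgen h') * psi c" for h h'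
    by (simp add: distrib_left distrib_right conv_add eqU_add psi_mul_gen)
  show ?thesis using assms by (cases g) (auto intro: psi_mul_gen A2 A3)
qed

lemma S_cons: "Dsum phi id (g # u) \<approx> Sg g * Dsum phi id u"
proof -
  have "Dsum phi id (g # u) \<approx> sum_list (map (\<lambda>(a, b). sum_list (map (\<lambda>(c, d). (phi a * b) * (phi c * d)) (Dword u))) (Dgen g))"
    unfolding Dsum_Cons
  proof (rule eqU_sum_list, clarify, rule eqU_sum_list, clarify)
    fix a b c d assume ab: "(a, b) \<in> set (Dgen g)"
    have "phi (a * c) * id (b * d) \<approx> (phi c * phi a) * (b * d)" using eqU_r[OF phi_mul_Dgen[OF ab]] by simp
    also have "\<dots> = phi c * (phi a * b) * d" by (simp add: mult.assoc)
    also have "\<dots> \<approx> (phi a * b) * phi c * d" using eqU_r[OF eqU_sym[OF cenD[OF cen_phi]]] .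
    finally show "phi (a * c) * id (b * d) \<approx> (phi a * b) * (phi c * d)" by (simp only: mult.assoc)
  qed
  also have "\<dots> = Sg g * Dsum phi id u"
    by (simp add: Sg_def Dsum_def split_def sum_list_const_mult sum_list_mult_const)
  finally show ?thesis .
qed

lemma R_cons: "Dsum psi Tmap (g # u) \<approx> Dsum psi Tmap u * Rg g"
proof -
  have "Dsum psi Tmap (g # u) \<approx> sum_list (map (\<lambda>(a, b). sum_list (map (\<lambda>(c, d). (psi c * Tmap d) * (psi a * Tmap b)) (Dword u))) (Dgen g))"
    unfolding Dsum_Cons
  proof (rule eqU_sum_list, clarify, rule eqU_sum_list, clarify)
    fix a b c d assume ab: "(a, b) \<in> set (Dgen g)"
    have "psi (a * c) * Tmap (b * d) \<approx> (psi a * psi c) * (Tmap d * Tmap b)"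
      using eqU_r[OF psi_mul_Dgen[OF ab]] by (simp add: Tmap_mult)
    also have "\<dots> = psi a * (psi c * Tmap d) * Tmap b" by (simp add: mult.assoc)
    also have "\<dots> \<approx> (psi c * Tmap d) * psi a * Tmap b" using eqU_r[OF eqU_sym[OF cenD[OF cen_psi]]] .
    finally show "psi (a * c) * Tmap (b * d) \<approx> (psi c * Tmap d) * (psi a * Tmap b)" by (simp only: mult.assoc)
  qed
  also have "\<dots> = Dsum psi Tmap u * Rg g"
    by (simp add: Rg_def Dsum_def split_def sum_list_const_mult sum_list_mult_const)
  finally show ?thesis .
qed

lemma Sg_all: "Sg g \<approx> fgen g"
proof (cases g)
  case gK
  have "Sg gK = phig gK * XK" by (simp add: Sg_def phi_fgen)
  also have "\<dots> \<approx> ee * XK" by (intro eqU_r phig_K)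
  also have "\<dots> \<approx> XK" by (rule e_K)
  finally show ?thesis using gK by simp
next
  case gKb
  have "Sg gKb = phig gKb * XKb" by (simp add: Sg_def phi_fgen)
  also have "\<dots> \<approx> ee * XKb" by (intro eqU_r phig_Kb)
  also have "\<dots> \<approx> XKb" by (rule e_Kb)
  finally show ?thesis using gKb by simp
next
  case gL
  have "Sg gL = phig gL * XL + (phig gL * XK + phig gK * XL)" by (simp add: Sg_def phi_fgen)
  also have "\<dots> \<approx> ff * XL + (ff * XK + ee * XL)" by (intro eqU_add eqU_r phig_L phig_K)
  also have "\<dots> \<approx> XL + (0 + 0)" by (intro eqU_add f_L zeros)
  finally show ?thesis using gL by simp
next
  case gLb
  have "Sg gLb = phig gLb * XLb + (phig gLb * XKb + phig gKb * XLb)" by (simp add: Sg_def phi_fgen)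
  also have "\<dots> \<approx> ff * XLb + (ff * XKb + ee * XLb)" by (intro eqU_add eqU_r phig_Lb phig_Kb)
  also have "\<dots> \<approx> XLb + (0 + 0)" by (intro eqU_add f_Lb zeros)
  finally show ?thesis using gLb by simp
next
  case gE
  have "Sg gE = phi 1 * XE + phig gE * (XK + XL)" by (simp add: Sg_def phi_fgen fone_eq conv_add)
  also have "\<dots> \<approx> 1 * XE + 0 * (XK + XL)" by (intro eqU_add eqU_r phig_E) (simp add: phi_one)
  finally show ?thesis using gE by simp
next
  case gF
  have "Sg gF = phig gF * 1 + (phig gKb + phig gLb) * XF" by (simp add: Sg_def phi_fgen fone_eq conv_add)
  also have "\<dots> \<approx> 0 * 1 + (ee + ff) * XF" by (intro eqU_add eqU_r phig_F phig_Kb phig_Lb)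
  also have "\<dots> \<approx> 0 * 1 + 1 * XF" by (intro eqU_add eqU_r ef1 eqU_refl)
  finally show ?thesis using gF by simp
qed

lemma Rg_all: "Rg g \<approx> Tgen g"
proof (cases g)
  case gK
  have "Rg gK = psig gK * XKb" by (simp add: Rg_def psi_fgen gsimps)
  also have "\<dots> \<approx> ee * XKb" by (intro eqU_r psig_K)
  also have "\<dots> \<approx> XKb" by (rule e_Kb)
  finally show ?thesis using gK by (simp add: Tgen_def)
next
  case gKb
  have "Rg gKb = psig gKb * XK" by (simp add: Rg_def psi_fgen gsimps)
  also have "\<dots> \<approx> ee * XK" by (intro eqU_r psig_Kb)
  also have "\<dots> \<approx> XK" by (rule e_K)
  finally show ?thesis using gKb by (simp add: Tgen_def)
next
  case gL
  have "Rg gL = psig gL * XLb + (psig gL * XKb + psig gK * XLb)" by (simp add: Rg_def psi_fgen gsimps)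
  also have "\<dots> \<approx> ff * XLb + (ff * XKb + ee * XLb)" by (intro eqU_add eqU_r psig_L psig_K)
  also have "\<dots> \<approx> XLb + (0 + 0)" by (intro eqU_add f_Lb zeros)
  finally show ?thesis using gL by (simp add: Tgen_def)
next
  case gLb
  have "Rg gLb = psig gLb * XL + (psig gLb * XK + psig gKb * XL)" by (simp add: Rg_def psi_fgen gsimps)
  also have "\<dots> \<approx> ff * XL + (ff * XK + ee * XL)" by (intro eqU_add eqU_r psig_Lb psig_Kb)
  also have "\<dots> \<approx> XL + (0 + 0)" by (intro eqU_add f_L zeros)
  finally show ?thesis using gLb by (simp add: Tgen_def)
next
  case gE
  have "Rg gE = psi 1 * Tgen gE + psig gE * (XKb + XLb)" by (simp add: Rg_def psi_fgen gsimps conv_add)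
  also have "\<dots> \<approx> 1 * Tgen gE + 0 * (XKb + XLb)" by (intro eqU_add eqU_r psig_E) (simp add: psi_one)
  finally show ?thesis using gE by simp
next
  case gF
  have "Rg gF = psig gF * 1 + (psig gKb + psig gLb) * Tgen gF" by (simp add: Rg_def psi_fgen gsimps conv_add)
  also have "\<dots> \<approx> 0 * 1 + (ee + ff) * Tgen gF" by (intro eqU_add eqU_r psig_F psig_Kb psig_Lb)
  also have "\<dots> \<approx> 0 * 1 + 1 * Tgen gF" by (intro eqU_add eqU_r ef1 eqU_refl)
  finally show ?thesis using gF by simp
qed

lemma S_word: "Dsum phi id w \<approx> Poly_Mapping.single w 1"
proof (induction w)
  case Nil then show ?case by (simp only: Dsum_Nil phi_one id_apply[of "1::free"]) (simp add: sc_one)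
next
  case (Cons g u)
  have "Dsum phi id (g # u) \<approx> Sg g * Dsum phi id u" by (rule S_cons)
  also have "\<dots> \<approx> fgen g * Poly_Mapping.single u 1" by (rule eqU_mult[OF Sg_all Cons])
  finally show ?case by (simp only: word_cons)
qed

lemma R_word: "Dsum psi Tmap w \<approx> Tword w"
proof (induction w)
  case Nil then show ?case by (simp only: Dsum_Nil psi_one id_apply[of "1::free"] Tmap_one) (simp add: fone_eq)
next
  case (Cons g u)
  have "Dsum psi Tmap (g # u) \<approx> Dsum psi Tmap u * Rg g" by (rule R_cons)
  also have "\<dots> \<approx> Tword u * Tgen g" by (rule eqU_mult[OF Cons Rg_all])
  finally show ?case by (simp only: Tword.simps fmul_eq)
qed

lemma part1: "conv phi id p \<approx> id p"
proof (induction p rule: lin_induct)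
  case 1 then show ?case by (simp add: conv_zero)
next
  case (2 w c)
  have "conv phi id (Poly_Mapping.single w c) = sc c * Dsum phi id w" by (rule conv_single)
  also have "\<dots> \<approx> sc c * Poly_Mapping.single w 1" by (rule eqU_l[OF S_word])
  finally have "conv phi id (Poly_Mapping.single w c) \<approx> Poly_Mapping.single w c" by (simp only: single_word[symmetric])
  then show ?case by (simp only: id_apply[of "Poly_Mapping.single w c"])
next
  case (3 a b) then show ?case by (simp add: conv_add eqU_add)
qed

lemma part2: "conv psi Tmap p \<approx> Tmap p"
proof (induction p rule: lin_induct)
  case 1 then show ?case by (simp add: conv_zero Tmap_zero)
next
  case (2 w c)
  have "conv psi Tmap (Poly_Mapping.single w c) = sc c * Dsum psi Tmap w" by (rule conv_single)
  also have "\<dots> \<approx> sc c * Tword w" by (rule eqU_l[OF R_word])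
  finally show ?case by (simp only: Tmap_single)
next
  case (3 a b) then show ?case by (simp add: conv_add Tmap_add eqU_add)
qed

end

theorem proposition9:
  fixes q :: complex
  assumes "q \<noteq> 0" and "q \<noteq> 1" and "q \<noteq> -1"
  shows "(\<forall>p. eqU q (conv (conv id Tmap) id p) (id p))
       \<and> (\<forall>p. eqU q (conv (conv Tmap id) Tmap p) (Tmap p))"
  using part1[OF assms(1)] part2[OF assms(1)] by blast

end
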